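(* Let $R\subset B$ be domains, $a_1,\ldots,a_s,b\in B\setminus\{0\}$ with $b$ not a unit of $B$, $R[y_1,\ldots,y_s]$ a polynomial ring, $\sigma:R[y_1,\ldots,y_s]\to B$ the $R$-algebra homomorphism with $\sigma(y_i)=a_i$, $\pi:B\to B/bB$ the natural surjection, $\bar\sigma:=\pi\circ\sigma$, and $A:=R[a_1,\ldots,a_s]$. If there exists $\mathcal S\subset R[y_1,\ldots,y_s]$ such that $\ker\bar\sigma$ is the ideal generated by $\mathcal S$ and $\sigma(\mathcal S)\subset bA[b]$, then $A[b^{\pm1}]\cap B=A[b]$ (intersection in $Q(B)$). If moreover $b\in A$, then $A[b^{-1}]\cap B=A$.
   Context: $Q(B)$ denotes the field of fractions of $B$. *)

theory Defs
  imports Main "HOL-Library.Poly_Mapping" "HOL-Computational_Algebra.Fraction_Field"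
begin

text \<open>Multivariate polynomials over the ambient domain 'b, in variables y_0..y_{s-1},
  represented as finitely supported maps from monomials (exponent vectors) to coefficients.\<close>
type_synonym 'b mpoly = "(nat \<Rightarrow>\<^sub>0 nat) \<Rightarrow>\<^sub>0 'b"

definition is_subring :: "'b::comm_ring_1 set \<Rightarrow> bool" where
  "is_subring R \<longleftrightarrow> 0 \<in> R \<and> 1 \<in> R \<and> (\<forall>x\<in>R. \<forall>y\<in>R. x + y \<in> R \<and> x - y \<in> R \<and> x * y \<in> R)"

definition poly_ring :: "'b::comm_ring_1 set \<Rightarrow> nat \<Rightarrow> 'b mpoly set" where
  "poly_ring R s = {p. \<forall>m. Poly_Mapping.lookup p m \<in> R \<and> (Poly_Mapping.lookup p m \<noteq> 0 \<longrightarrow> Poly_Mapping.keys m \<subseteq> {..<s})}"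

definition eval_mpoly :: "(nat \<Rightarrow> 'b::comm_ring_1) \<Rightarrow> 'b mpoly \<Rightarrow> 'b" where
  "eval_mpoly a p = (\<Sum>m\<in>Poly_Mapping.keys p. Poly_Mapping.lookup p m * (\<Prod>i\<in>Poly_Mapping.keys m. a i ^ Poly_Mapping.lookup m i))"

definition ideal_gen :: "'b::comm_ring_1 mpoly set \<Rightarrow> 'b mpoly set \<Rightarrow> 'b mpoly set" where
  "ideal_gen P S = {f. \<exists>n (q::nat \<Rightarrow> 'b mpoly) (g::nat \<Rightarrow> 'b mpoly).
      (\<forall>j<n. q j \<in> P \<and> g j \<in> S) \<and> f = (\<Sum>j<n. q j * g j)}"

definition alg_gen :: "'b::comm_ring_1 set \<Rightarrow> nat \<Rightarrow> (nat \<Rightarrow> 'b) \<Rightarrow> 'b set" where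
  "alg_gen R s a = eval_mpoly a ` poly_ring R s"

definition adjoin :: "'b::comm_ring_1 set \<Rightarrow> 'b \<Rightarrow> 'b set" where
  "adjoin A b = {x. \<exists>n c. (\<forall>k\<le>n. c k \<in> A) \<and> x = (\<Sum>k\<le>n. c k * b ^ k)}"

definition localize :: "'b::idom set \<Rightarrow> 'b \<Rightarrow> 'b fract set" where
  "localize C b = {Fract x (b ^ n) | x n. x \<in> C}"

abbreviation emb :: "'b::idom \<Rightarrow> 'b fract" where
  "emb x \<equiv> Fract x 1"

end

theory Submission
  imports Defs "HOL-Computational_Algebra.Polynomial"
begin

lemma pm_induct:
  assumes "P 0" and "\<And>f a b. a \<notin> Poly_Mapping.keys f \<Longrightarrow> b \<noteq> 0 \<Longrightarrow> P f \<Longrightarrow> P (f + Poly_Mapping.single a b)"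
  shows "P f"
proof (induct f rule: Poly_Mapping.update_induct)
  case const then show ?case using assms(1) .
next
  case (update f a b)
  have "Poly_Mapping.update a b f = f + Poly_Mapping.single a b"
    using update(1) by (intro poly_mapping_eqI) (auto simp: lookup_update lookup_add lookup_single in_keys_iff when_def)
  then show ?case using assms(2)[OF update(1,2,3)] by simp
qed

definition mon :: "(nat \<Rightarrow> 'b::comm_ring_1) \<Rightarrow> (nat \<Rightarrow>\<^sub>0 nat) \<Rightarrow> 'b" where
  "mon a m = (\<Prod>i\<in>Poly_Mapping.keys m. a i ^ Poly_Mapping.lookup m i)"

lemma mon_sub: "finite K \<Longrightarrow> Poly_Mapping.keys m \<subseteq> K \<Longrightarrow> mon a m = (\<Prod>i\<in>K. a i ^ Poly_Mapping.lookup m i)"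
  unfolding mon_def by (rule prod.mono_neutral_left) (auto simp: in_keys_iff)

lemma mon_add: "mon a (m + m') = mon a m * mon a m'"
proof -
  let ?K = "Poly_Mapping.keys m \<union> Poly_Mapping.keys m'"
  have "mon a (m + m') = (\<Prod>i\<in>?K. a i ^ Poly_Mapping.lookup (m + m') i)"
    using keys_add[of m m'] by (intro mon_sub) auto
  also have "\<dots> = (\<Prod>i\<in>?K. a i ^ Poly_Mapping.lookup m i) * (\<Prod>i\<in>?K. a i ^ Poly_Mapping.lookup m' i)"
    by (simp add: lookup_add power_add prod.distrib)
  also have "\<dots> = mon a m * mon a m'"
    by (simp add: mon_sub[of ?K m] mon_sub[of ?K m'])
  finally show ?thesis .
qed

lemma eval_def2: "eval_mpoly a p = (\<Sum>m\<in>Poly_Mapping.keys p. Poly_Mapping.lookup p m * mon a m)"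
  unfolding eval_mpoly_def mon_def ..

lemma eval_sub: "finite K \<Longrightarrow> Poly_Mapping.keys p \<subseteq> K \<Longrightarrow>
   eval_mpoly a p = (\<Sum>m\<in>K. Poly_Mapping.lookup p m * mon a m)"
  unfolding eval_def2 by (rule sum.mono_neutral_left) (auto simp: in_keys_iff)

lemma eval_add: "eval_mpoly a (p + q) = eval_mpoly a p + eval_mpoly a (q::'b::comm_ring_1 mpoly)"
proof -
  let ?K = "Poly_Mapping.keys p \<union> Poly_Mapping.keys q"
  have "eval_mpoly a (p + q) = (\<Sum>m\<in>?K. Poly_Mapping.lookup (p+q) m * mon a m)"
    using keys_add[of p q] by (intro eval_sub) auto
  also have "\<dots> = (\<Sum>m\<in>?K. Poly_Mapping.lookup p m * mon a m) + (\<Sum>m\<in>?K. Poly_Mapping.lookup q m * mon a m)"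
    by (simp add: lookup_add distrib_right sum.distrib)
  also have "\<dots> = eval_mpoly a p + eval_mpoly a q"
    by (simp add: eval_sub[of ?K p] eval_sub[of ?K q])
  finally show ?thesis .
qed

lemma eval_zero[simp]: "eval_mpoly a 0 = 0"
  by (simp add: eval_mpoly_def)

lemma eval_single: "eval_mpoly a (Poly_Mapping.single m c) = c * mon a m"
  by (subst eval_sub[of "{m}"]) auto

lemma eval_mult_single: "eval_mpoly a (Poly_Mapping.single m c * q) = c * mon a m * eval_mpoly a (q::'b::comm_ring_1 mpoly)"
proof (induct q rule: pm_induct)
  case 1 then show ?case by simp
next
  case (2 f k d)
  then show ?case
    by (simp add: distrib_left eval_add mult_single eval_single mon_add algebra_simps)
qed

lemma eval_mult: "eval_mpoly a (p * q) = eval_mpoly a p * eval_mpoly a (q::'b::comm_ring_1 mpoly)"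
proof (induct p rule: pm_induct)
  case 1 then show ?case by simp
next
  case (2 f k d)
  have "(f + Poly_Mapping.single k d) * q = f * q + Poly_Mapping.single k d * q"
    by (simp add: distrib_right)
  then have "eval_mpoly a ((f + Poly_Mapping.single k d) * q) = eval_mpoly a (f * q) + eval_mpoly a (Poly_Mapping.single k d * q)"
    by (simp only: eval_add)
  also have "\<dots> = eval_mpoly a f * eval_mpoly a q + d * mon a k * eval_mpoly a q"
    by (simp only: 2(3) eval_mult_single)
  finally show ?case
    by (simp add: eval_add eval_single algebra_simps)
qed

lemma eval_sum: "eval_mpoly a (\<Sum>j<(n::nat). f j) = (\<Sum>j<n. eval_mpoly a (f j))"
  by (induct n) (auto simp: eval_add)

lemma P_mem: "p \<in> poly_ring R s \<longleftrightarrow> (\<forall>m. Poly_Mapping.lookup p m \<in> R) \<and> (\<forall>m. Poly_Mapping.lookup p m \<noteq> 0 \<longrightarrow> Poly_Mapping.keys m \<subseteq> {..<s})"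
  unfolding poly_ring_def by blast

lemma single_in_P: "0 \<in> R \<Longrightarrow> c \<in> R \<Longrightarrow> (c \<noteq> 0 \<Longrightarrow> Poly_Mapping.keys m \<subseteq> {..<s}) \<Longrightarrow> Poly_Mapping.single m c \<in> poly_ring R s"
  unfolding P_mem by (auto simp: lookup_single when_def)

lemma P_add: assumes "is_subring R" "p \<in> poly_ring R s" "q \<in> poly_ring R s" shows "p + q \<in> poly_ring R s"
  unfolding P_mem
proof (intro conjI allI impI)
  fix m
  show "Poly_Mapping.lookup (p + q) m \<in> R" using assms unfolding P_mem is_subring_def by (simp add: lookup_add)
next
  fix m assume "Poly_Mapping.lookup (p + q) m \<noteq> 0"
  then have "Poly_Mapping.lookup p m \<noteq> 0 \<or> Poly_Mapping.lookup q m \<noteq> 0" by (auto simp: lookup_add)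
  then show "Poly_Mapping.keys m \<subseteq> {..<s}" using assms(2,3) unfolding P_mem by blast
qed

lemma P_split: assumes "k \<notin> Poly_Mapping.keys f" "f + Poly_Mapping.single k d \<in> poly_ring R s" "0 \<in> R"
  shows "f \<in> poly_ring R s" "Poly_Mapping.single k d \<in> poly_ring R s"
proof -
  have fk: "Poly_Mapping.lookup f k = 0" using assms(1) by (simp add: in_keys_iff)
  have L: "\<And>m. Poly_Mapping.lookup (f + Poly_Mapping.single k d) m = (if m = k then d else Poly_Mapping.lookup f m)"
    using fk by (auto simp: lookup_add lookup_single when_def)
  have A: "\<And>m. (if m = k then d else Poly_Mapping.lookup f m) \<in> R"
    and B: "\<And>m. (if m = k then d else Poly_Mapping.lookup f m) \<noteq> 0 \<Longrightarrow> Poly_Mapping.keys m \<subseteq> {..<s}"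
    using assms(2) unfolding P_mem L by blast+
  show "f \<in> poly_ring R s" unfolding P_mem
  proof (intro conjI allI impI)
    fix m show "Poly_Mapping.lookup f m \<in> R" using A[of m] fk assms(3) by (cases "m = k") auto
  next
    fix m assume "Poly_Mapping.lookup f m \<noteq> 0"
    then show "Poly_Mapping.keys m \<subseteq> {..<s}" using B[of m] fk by (cases "m = k") auto
  qed
  show "Poly_Mapping.single k d \<in> poly_ring R s"
    using A[of k] B[of k] assms(3) by (intro single_in_P) auto
qed

lemma P_mult_single:
  assumes R: "is_subring R" and "Poly_Mapping.single k d \<in> poly_ring R s" "q \<in> poly_ring R s"
  shows "Poly_Mapping.single k d * q \<in> poly_ring R s"
  using assms(3)
proof (induct q rule: pm_induct)
  case 1 then show ?case by simp
next
  case (2 f k' d')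
  have R0: "0 \<in> R" using R unfolding is_subring_def by blast
  have f: "f \<in> poly_ring R s" and sg: "Poly_Mapping.single k' d' \<in> poly_ring R s"
    using P_split[OF 2(1) 2(4) R0] by auto
  have "Poly_Mapping.single k d * Poly_Mapping.single k' d' \<in> poly_ring R s"
  proof -
    have dR: "d \<in> R" "d' \<in> R" using assms(2) sg unfolding P_mem by (metis lookup_single_eq)+
    have dk: "d \<noteq> 0 \<Longrightarrow> Poly_Mapping.keys k \<subseteq> {..<s}" "d' \<noteq> 0 \<Longrightarrow> Poly_Mapping.keys k' \<subseteq> {..<s}"
      using assms(2) sg unfolding P_mem by (metis lookup_single_eq)+
    have "d * d' \<in> R" using dR R unfolding is_subring_def by blast
    moreover have "Poly_Mapping.keys (k + k') \<subseteq> {..<s}" if "d * d' \<noteq> 0"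
    proof -
      have "d \<noteq> 0" "d' \<noteq> 0" using that by auto
      then show ?thesis using dk keys_add[of k k'] by blast
    qed
    ultimately show ?thesis unfolding mult_single using R0 by (intro single_in_P) auto
  qed
  then show ?case using 2(3)[OF f] by (simp add: distrib_left P_add[OF R])
qed

lemma P_mult:
  assumes R: "is_subring R" and "p \<in> poly_ring R s" "q \<in> poly_ring R s"
  shows "p * q \<in> poly_ring R s"
  using assms(2)
proof (induct p rule: pm_induct)
  case 1 then show ?case by simp
next
  case (2 f k d)
  have R0: "0 \<in> R" using R unfolding is_subring_def by blast
  have f: "f \<in> poly_ring R s" and sg: "Poly_Mapping.single k d \<in> poly_ring R s"
    using P_split[OF 2(1) 2(4) R0] by auto
  show ?case using 2(3)[OF f] P_mult_single[OF R sg assms(3)] by (simp add: distrib_right P_add[OF R])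
qed


lemma A_facts:
  fixes R :: "'b::comm_ring_1 set"
  assumes R: "is_subring R"
  shows "0 \<in> alg_gen R s a" "1 \<in> alg_gen R s a"
    "\<And>x y. x \<in> alg_gen R s a \<Longrightarrow> y \<in> alg_gen R s a \<Longrightarrow> x + y \<in> alg_gen R s a"
    "\<And>x y. x \<in> alg_gen R s a \<Longrightarrow> y \<in> alg_gen R s a \<Longrightarrow> x * y \<in> alg_gen R s a"
proof -
  have R0: "0 \<in> R" and R1: "1 \<in> R" using R unfolding is_subring_def by auto
  have "(0::'b mpoly) \<in> poly_ring R s" using R0 unfolding P_mem by simp
  then show "0 \<in> alg_gen R s a" unfolding alg_gen_def by (metis eval_zero image_eqI)
  have "Poly_Mapping.single 0 (1::'b) \<in> poly_ring R s" using R0 R1 by (intro single_in_P) auto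
  moreover have "eval_mpoly a (Poly_Mapping.single 0 (1::'b)) = 1" by (simp del: single_one add: eval_single mon_def)
  ultimately show "1 \<in> alg_gen R s a" unfolding alg_gen_def by (metis image_eqI)
  fix x y assume "x \<in> alg_gen R s a" "y \<in> alg_gen R s a"
  then obtain p q where p: "p \<in> poly_ring R s" "x = eval_mpoly a p" and q: "q \<in> poly_ring R s" "y = eval_mpoly a q"
    unfolding alg_gen_def by auto
  show "x + y \<in> alg_gen R s a" unfolding alg_gen_def
    using p q P_add[OF R p(1) q(1)] by (metis eval_add image_eqI)
  show "x * y \<in> alg_gen R s a" unfolding alg_gen_def
    using p q P_mult[OF R p(1) q(1)] by (metis eval_mult image_eqI)
qed

lemma adjoin_poly:
  fixes A :: "'b::comm_ring_1 set"
  assumes A0: "0 \<in> A" and Aadd: "\<And>x y. x \<in> A \<Longrightarrow> y \<in> A \<Longrightarrow> x + y \<in> A"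
  shows "x \<in> adjoin A b \<longleftrightarrow> (\<exists>p. (\<forall>i. coeff p i \<in> A) \<and> x = poly p b)"
proof
  assume "x \<in> adjoin A b"
  then obtain n c where c: "\<forall>k\<le>n. c k \<in> A" and x: "x = (\<Sum>k\<le>n. c k * b ^ k)"
    unfolding adjoin_def by auto
  have "\<exists>p. (\<forall>i. coeff p i \<in> A) \<and> (\<Sum>k\<le>m. c k * b ^ k) = poly p b" if "m \<le> n" for m
    using that
  proof (induct m)
    case 0
    then show ?case using c A0 by (intro exI[of _ "monom (c 0) 0"]) (auto simp: poly_monom)
  next
    case (Suc m)
    then obtain p where p: "\<forall>i. coeff p i \<in> A" "(\<Sum>k\<le>m. c k * b ^ k) = poly p b" by auto
    have cS: "c (Suc m) \<in> A" using c Suc(2) by auto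
    show ?case
    proof (intro exI[of _ "p + monom (c (Suc m)) (Suc m)"] conjI allI)
      fix i show "coeff (p + monom (c (Suc m)) (Suc m)) i \<in> A"
        using p(1) cS A0 Aadd by (auto simp: coeff_add)
    next
      show "(\<Sum>k\<le>Suc m. c k * b ^ k) = poly (p + monom (c (Suc m)) (Suc m)) b"
        using p(2) by (simp add: poly_monom)
    qed
  qed
  then show "\<exists>p. (\<forall>i. coeff p i \<in> A) \<and> x = poly p b" using x by auto
next
  assume "\<exists>p. (\<forall>i. coeff p i \<in> A) \<and> x = poly p b"
  then obtain p where "\<forall>i. coeff p i \<in> A" "x = poly p b" by auto
  then show "x \<in> adjoin A b" unfolding adjoin_def poly_altdef by blast
qed


theorem lemma5p5:
  fixes R :: "'b::idom set" and s :: nat and a :: "nat \<Rightarrow> 'b" and b :: 'b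
    and S :: "'b mpoly set"
  assumes R: "is_subring R"
    and a_nz: "\<forall>i<s. a i \<noteq> 0"
    and b_nz: "b \<noteq> 0"
    and b_nunit: "\<not> b dvd 1"
    and S_sub: "S \<subseteq> poly_ring R s"
    and ker: "{p \<in> poly_ring R s. b dvd eval_mpoly a p} = ideal_gen (poly_ring R s) S"
    and S_img: "\<forall>f\<in>S. \<exists>x\<in>adjoin (alg_gen R s a) b. eval_mpoly a f = b * x"
  shows "localize (adjoin (alg_gen R s a) b) b \<inter> range emb = emb ` adjoin (alg_gen R s a) b
         \<and> (b \<in> alg_gen R s a \<longrightarrow>
           localize (alg_gen R s a) b \<inter> range emb = emb ` alg_gen R s a)"
proof -
  define A where "A = alg_gen R s a"
  define AB where "AB = adjoin A b"
  note Af = A_facts[OF R, where s=s and a=a, folded A_def]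
  have ABc: "x \<in> AB \<longleftrightarrow> (\<exists>p. (\<forall>i. coeff p i \<in> A) \<and> x = poly p b)" for x
    unfolding AB_def by (rule adjoin_poly) (use Af in auto)
  have AB_add: "x + y \<in> AB" if h: "x \<in> AB" "y \<in> AB" for x y
  proof -
    obtain p where "\<forall>i. coeff p i \<in> A" "x = poly p b"
      using h(1) unfolding ABc by blast
    moreover obtain q where "\<forall>i. coeff q i \<in> A" "y = poly q b"
      using h(2) unfolding ABc by blast
    ultimately
    show ?thesis unfolding ABc by (intro exI[of _ "p + q"]) (auto simp: coeff_add Af)
  qed
  have AB_smult: "c * x \<in> AB" if h: "c \<in> A" "x \<in> AB" for c x
  proof -
    obtain p where "\<forall>i. coeff p i \<in> A" "x = poly p b"
      using h(2) unfolding ABc by blast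
    then show ?thesis unfolding ABc using h(1) by (intro exI[of _ "smult c p"]) (auto simp: Af)
  qed
  have AB_0: "0 \<in> AB" unfolding ABc by (intro exI[of _ 0]) (auto simp: Af)
  have A_AB: "c \<in> AB" if "c \<in> A" for c
    unfolding ABc using that Af by (intro exI[of _ "monom c 0"]) (auto simp: poly_monom)
  have AB_sum: "(\<forall>j<n. f j \<in> AB) \<Longrightarrow> (\<Sum>j<n. f j) \<in> AB" for n :: nat and f
    by (induct n) (auto simp: AB_0 AB_add)
  have key: "w \<in> AB" if h: "b * w \<in> AB" for w
  proof -
    obtain p where p: "\<forall>i. coeff p i \<in> A" "b * w = poly p b" using h unfolding ABc by blast
    obtain c0 p' where pc: "p = pCons c0 p'" by (cases p)
    have c0A: "c0 \<in> A" using p(1) pc by (metis coeff_pCons_0)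
    have p'A: "poly p' b \<in> AB" unfolding ABc using p(1) pc by (metis coeff_pCons_Suc)
    have c0eq: "c0 = b * (w - poly p' b)" using p(2) pc by (simp add: algebra_simps)
    obtain r where r: "r \<in> poly_ring R s" "c0 = eval_mpoly a r" using c0A unfolding A_def alg_gen_def by auto
    have "r \<in> ideal_gen (poly_ring R s) S" unfolding ker[symmetric] using r c0eq by (metis (mono_tags, lifting) dvd_triv_left mem_Collect_eq)
    then have "\<exists>(n::nat) q g. (\<forall>j<n. q j \<in> poly_ring R s \<and> g j \<in> S) \<and> r = (\<Sum>j<n. q j * g j)"
      unfolding ideal_gen_def by (rule CollectD)
    then obtain n :: nat and q g where qg: "\<forall>j<n. q j \<in> poly_ring R s \<and> g j \<in> S" and rs: "r = (\<Sum>j<n. q j * g j)"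
      by blast
    define X where "X j = (SOME x. x \<in> AB \<and> eval_mpoly a (g j) = b * x)" for j
    have X: "X j \<in> AB \<and> eval_mpoly a (g j) = b * X j" if "j < n" for j
    proof -
      have "\<exists>x. x \<in> AB \<and> eval_mpoly a (g j) = b * x" using S_img qg that unfolding AB_def A_def by auto
      then show ?thesis unfolding X_def by (rule someI_ex)
    qed
    define z where "z = (\<Sum>j<n. eval_mpoly a (q j) * X j)"
    have zAB: "z \<in> AB" unfolding z_def
      by (rule AB_sum) (use X qg AB_smult in \<open>auto simp: A_def alg_gen_def\<close>)
    have "c0 = (\<Sum>j<n. eval_mpoly a (q j) * eval_mpoly a (g j))" using r rs by (simp add: eval_sum eval_mult)
    also have "\<dots> = (\<Sum>j<n. b * (eval_mpoly a (q j) * X j))" using X by (intro sum.cong) (auto simp: algebra_simps)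
    also have "\<dots> = b * z" unfolding z_def by (simp add: sum_distrib_left)
    finally have "b * (w - poly p' b) = b * z" using c0eq by simp
    then have "w - poly p' b = z" using b_nz by simp
    then have "w = z + poly p' b" by (simp add: algebra_simps)
    then show ?thesis using zAB p'A AB_add by simp
  qed
  have keyn: "z \<in> AB" if "z * b ^ n \<in> AB" for z n
    using that
  proof (induct n)
    case 0 then show ?case by simp
  next
    case (Suc n)
    have "b * (z * b ^ n) \<in> AB" using Suc(2) by (simp add: algebra_simps)
    then show ?case using key Suc(1) by blast
  qed
  have part1: "localize C b \<inter> range emb = emb ` C" if CAB: "C = AB" for C
  proof
    show "emb ` C \<subseteq> localize C b \<inter> range emb"
    proof
      fix t assume "t \<in> emb ` C"
      then obtain z where "z \<in> C" "t = Fraction_Field.Fract z 1" by auto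
      moreover have "Fraction_Field.Fract z 1 = Fraction_Field.Fract z (b ^ 0)" by simp
      ultimately show "t \<in> localize C b \<inter> range emb" unfolding localize_def
        by blast
    qed
    show "localize C b \<inter> range emb \<subseteq> emb ` C"
    proof
      fix t assume "t \<in> localize C b \<inter> range emb"
      then obtain y n z where y: "y \<in> C" "t = Fraction_Field.Fract y (b ^ n)" "t = Fraction_Field.Fract z 1"
        unfolding localize_def by auto
      then have "y * 1 = z * b ^ n" using b_nz by (simp add: eq_fract)
      then have "z \<in> C" using y(1) keyn CAB by simp
      then show "t \<in> emb ` C" using y(3) by blast
    qed
  qed
  have part2: "AB = A" if "b \<in> A"
  proof
    show "A \<subseteq> AB" using A_AB by auto
    show "AB \<subseteq> A"
    proof
      fix x assume "x \<in> AB"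
      then obtain p where p: "\<forall>i. coeff p i \<in> A" "x = poly p b" unfolding ABc by blast
      have "(\<forall>i. coeff p i \<in> A) \<longrightarrow> poly p b \<in> A"
      proof (induct p)
        case 0 then show ?case using Af by simp
      next
        case (pCons c p)
        show ?case
        proof
          assume h: "\<forall>i. coeff (pCons c p) i \<in> A"
          then have "c \<in> A" by (metis coeff_pCons_0)
          moreover have "poly p b \<in> A" using pCons(2) h by (metis coeff_pCons_Suc)
          ultimately show "poly (pCons c p) b \<in> A" using that Af by simp
        qed
      qed
      then show "x \<in> A" using p by simp
    qed
  qed
  show ?thesis
  proof
    show "localize (adjoin (alg_gen R s a) b) b \<inter> range emb = emb ` adjoin (alg_gen R s a) b"
      using part1[of AB] unfolding AB_def A_def by simp
    show "b \<in> alg_gen R s a \<longrightarrow> localize (alg_gen R s a) b \<inter> range emb = emb ` alg_gen R s a"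
    proof
      assume "b \<in> alg_gen R s a"
      then have "AB = A" using part2 unfolding A_def by blast
      then show "localize (alg_gen R s a) b \<inter> range emb = emb ` alg_gen R s a"
        using part1[of A] unfolding A_def by simp
    qed
  qed
qed

end
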